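(* Let $1<p\le 2$ and let $X$ be a separable Banach space having Azuma type $p$ with Azuma type constant $K_{p,X}$. Then for every $X$-valued conditionally symmetric martingale $f=(f_j)_{j=0}^{\infty}$ (relative to a filtration $(\mathscr{F}_j)_{j=0}^\infty$), every $\beta>0$ and every $0<\delta<\beta-1$, $$\mathbb{P}\{f^*>\beta\lambda,\ S_p(f)\le\delta\lambda\}\le 2\exp\left\{-\frac{(\beta-1-\delta)^p}{K_{p,X}\,\delta^p}\right\}\mathbb{P}\{f^*>\lambda\}$$ for all $\lambda>0$.
   Context: Notation: $d_{j,f}=f_j-f_{j-1}$, $f^*=\sup_{j\in\mathbb{N}}\|f_j-f_0\|$, $S_p(f)=(\sum_{j=1}^\infty\|d_{j,f}\|^p)^{1/p}$; all filtrations have trivial $\mathscr{F}_0$. A martingale $f$ is conditionally symmetric if $\mathbb{E}\varphi(d_{1,f},\dots,d_{j-1,f},d_{j,f})=\mathbb{E}\varphi(d_{1,f},\dots,d_{j-1,f},-d_{j,f})$ for all bounded continuous $\varphi:X^j\to\mathbb{R}$ and all $j$. A Banach space $X$ has Azuma type $p$ if there is $K>0$ such that for every $X$-valued martingale $f$ (relative to any filtration) and every nonnegative predictable sequence $w=(w_j)_{j\ge1}$ ($w_j$ is $\mathscr{F}_{j-1}$-measurable) with $\|d_{j,f}\|\le w_j$ for all $j$, one has for all $r>0$: $\mathbb{P}\{f^*\ge r\}\le 2\exp\{-r^p/(K\|\sum_{j=1}^\infty w_j^p\|_\infty)\}$. The smallest such $K$ is the Azuma type constant $K_{p,X}$. 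*)

theory Defs
  imports "HOL-Probability.Probability"
begin

definition filtration_on :: "'w measure \<Rightarrow> (nat \<Rightarrow> 'w measure) \<Rightarrow> bool" where
  "filtration_on M F \<longleftrightarrow>
     (\<forall>j. space (F j) = space M \<and> sets (F j) \<subseteq> sets M) \<and>
     (\<forall>j. sets (F j) \<subseteq> sets (F (Suc j))) \<and>
     sets (F 0) = {{}, space M}"

text \<open>X-valued martingale: adapted, Bochner integrable, and
  E[f (j+1) | F j] = f j, i.e. equal integrals over every set of F j.\<close>
definition martingale_on :: "'w measure \<Rightarrow> (nat \<Rightarrow> 'w measure) \<Rightarrow> (nat \<Rightarrow> 'w \<Rightarrow> 'x::{banach,second_countable_topology}) \<Rightarrow> bool" where
  "martingale_on M F f \<longleftrightarrow>
     (\<forall>j. f j \<in> borel_measurable (F j) \<and> integrable M (f j) \<and>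
          (\<forall>A\<in>sets (F j). set_lebesgue_integral M A (f (Suc j)) = set_lebesgue_integral M A (f j)))"

text \<open>Martingale difference d_{j,f} = f_j - f_{j-1} (meaningful for j \<ge> 1).\<close>
definition mdiff :: "(nat \<Rightarrow> 'w \<Rightarrow> 'x::{banach,second_countable_topology}) \<Rightarrow> nat \<Rightarrow> 'w \<Rightarrow> 'x" where
  "mdiff f j \<omega> = f j \<omega> - f (j - 1) \<omega>"

definition mstar :: "(nat \<Rightarrow> 'w \<Rightarrow> 'x::{banach,second_countable_topology}) \<Rightarrow> 'w \<Rightarrow> ennreal" where
  "mstar f \<omega> = (SUP j. ennreal (norm (f j \<omega> - f 0 \<omega>)))"

definition Sp :: "real \<Rightarrow> (nat \<Rightarrow> 'w \<Rightarrow> 'x::{banach,second_countable_topology}) \<Rightarrow> 'w \<Rightarrow> ennreal" where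
  "Sp p f \<omega> =
     (let s = (\<Sum>j. ennreal (norm (mdiff f (Suc j) \<omega>) powr p))
      in if s = \<top> then \<top> else ennreal (enn2real s powr (1 / p)))"

text \<open>Conditional symmetry, with X^j represented by functions nat \<Rightarrow> X (product topology)
  that depend only on the coordinates 1..j.\<close>
definition cond_symmetric :: "'w measure \<Rightarrow> (nat \<Rightarrow> 'w \<Rightarrow> 'x::{banach,second_countable_topology}) \<Rightarrow> bool" where
  "cond_symmetric M f \<longleftrightarrow>
     (\<forall>j\<ge>1. \<forall>\<phi> :: (nat \<Rightarrow> 'x) \<Rightarrow> real.
        continuous_on UNIV \<phi> \<and> bounded (range \<phi>) \<and>
        (\<forall>x y. (\<forall>i\<in>{1..j}. x i = y i) \<longrightarrow> \<phi> x = \<phi> y) \<longrightarrow>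
        (\<integral>\<omega>. \<phi> (\<lambda>i. mdiff f i \<omega>) \<partial>M) =
        (\<integral>\<omega>. \<phi> ((\<lambda>i. mdiff f i \<omega>)(j := - mdiff f j \<omega>)) \<partial>M))"

text \<open>Right-hand side 2 exp(-r^p / (K S)) of the Azuma inequality, where S = \<parallel>\<Sum> w_j^p\<parallel>_\<infinity>
  in [0,\<infinity>]; conventions: S = 0 gives 0 (exp(-\<infinity>)), S = \<infinity> gives 2 (exp 0).\<close>
definition azuma_bound :: "real \<Rightarrow> real \<Rightarrow> ennreal \<Rightarrow> real \<Rightarrow> real" where
  "azuma_bound p K S r =
     (if S = 0 then 0 else if S = \<top> then 2
      else 2 * exp (- (r powr p) / (K * enn2real S)))"

definition azuma_K :: "'w itself \<Rightarrow> 'x::{banach,second_countable_topology} itself \<Rightarrow> real \<Rightarrow> real \<Rightarrow> bool" where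
  "azuma_K TW TX p K \<longleftrightarrow> K > 0 \<and>
     (\<forall>(M :: 'w measure) F (f :: nat \<Rightarrow> 'w \<Rightarrow> 'x) (w :: nat \<Rightarrow> 'w \<Rightarrow> real).
        prob_space M \<and> filtration_on M F \<and> martingale_on M F f \<and>
        (\<forall>j\<ge>1. w j \<in> borel_measurable (F (j - 1)) \<and> (\<forall>\<omega>\<in>space M. w j \<omega> \<ge> 0)) \<and>
        (\<forall>j\<ge>1. AE \<omega> in M. norm (mdiff f j \<omega>) \<le> w j \<omega>)
        \<longrightarrow> (\<forall>r>0. measure M {\<omega>\<in>space M. ennreal r \<le> mstar f \<omega>}
                   \<le> azuma_bound p K (esssup M (\<lambda>\<omega>. \<Sum>j. ennreal (w (Suc j) \<omega> powr p))) r))"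

definition has_azuma_type :: "'w itself \<Rightarrow> 'x::{banach,second_countable_topology} itself \<Rightarrow> real \<Rightarrow> bool" where
  "has_azuma_type TW TX p \<longleftrightarrow> (\<exists>K. azuma_K TW TX p K)"

definition azuma_const :: "'w itself \<Rightarrow> 'x::{banach,second_countable_topology} itself \<Rightarrow> real \<Rightarrow> real" where
  "azuma_const TW TX p = Inf {K. azuma_K TW TX p K}"

end

theory Submission
  imports Defs
begin



lemma borel_measure_eq_bcont:
  fixes \<mu>1 \<mu>2 :: "'a::metric_space measure"
  assumes s1: "sets \<mu>1 = sets borel" and s2: "sets \<mu>2 = sets borel"
    and f1: "finite_measure \<mu>1" and f2: "finite_measure \<mu>2"
    and eq: "\<And>\<phi> :: 'a \<Rightarrow> real. continuous_on UNIV \<phi> \<Longrightarrow> (\<And>x. 0 \<le> \<phi> x \<and> \<phi> x \<le> 1) \<Longrightarrow>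
              integral\<^sup>L \<mu>1 \<phi> = integral\<^sup>L \<mu>2 \<phi>"
  shows "\<mu>1 = \<mu>2"
proof (rule measure_eqI_generator_eq[where E="Collect closed" and \<Omega>=UNIV and A="\<lambda>_. UNIV"])
  show "Int_stable (Collect closed)" by (auto simp: Int_stable_def)
  show "Collect closed \<subseteq> Pow UNIV" by auto
  show "sets \<mu>1 = sigma_sets UNIV (Collect closed)" using s1 by (simp add: borel_eq_closed)
  show "sets \<mu>2 = sigma_sets UNIV (Collect closed)" using s2 by (simp add: borel_eq_closed)
  show "range (\<lambda>_. UNIV) \<subseteq> Collect closed" by auto
  show "(\<Union>i. UNIV) = UNIV" by auto
  show "emeasure \<mu>1 UNIV \<noteq> \<infinity>" for i :: nat
    using finite_measure.emeasure_finite[OF f1] by simp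
  fix C :: "'a set" assume "C \<in> Collect closed"
  then have C: "closed C" by simp
  have sp1: "space \<mu>1 = UNIV" using s1 by (metis sets_eq_imp_space_eq space_borel)
  have sp2: "space \<mu>2 = UNIV" using s2 by (metis sets_eq_imp_space_eq space_borel)
  have Cs1: "C \<in> sets \<mu>1" using s1 C by (simp add: borel_closed)
  have Cs2: "C \<in> sets \<mu>2" using s2 C by (simp add: borel_closed)
  show "emeasure \<mu>1 C = emeasure \<mu>2 C"
  proof (cases "C = {}")
    case True then show ?thesis by simp
  next
    case False
    define \<phi> where "\<phi> m x = max 0 (1 - real m * infdist x C)" for m :: nat and x
    have cont: "continuous_on UNIV (\<phi> m)" for m
      unfolding \<phi>_def by (intro continuous_intros)
    have rng: "0 \<le> \<phi> m x \<and> \<phi> m x \<le> 1" for m x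
      unfolding \<phi>_def using infdist_nonneg[of x C] by auto
    have lim: "(\<lambda>m. \<phi> m x) \<longlonglongrightarrow> indicator C x" for x
    proof (cases "x \<in> C")
      case True
      then have "infdist x C = 0" using in_closed_iff_infdist_zero[OF C False] by simp
      then show ?thesis using True by (simp add: \<phi>_def)
    next
      case nC: False
      then have pos: "infdist x C > 0" using in_closed_iff_infdist_zero[OF C False] infdist_nonneg[of x C] by auto
      obtain N :: nat where N: "1 / infdist x C < real N" using reals_Archimedean2 by blast
      have "eventually (\<lambda>m. \<phi> m x = indicator C x) sequentially"
        unfolding eventually_sequentially
      proof (intro exI allI impI)
        fix m assume "N \<le> m"
        then have "1 < real m * infdist x C" using N pos
          by (smt (verit, ccfv_SIG) divide_less_eq mult_right_mono of_nat_le_iff)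
        then show "\<phi> m x = indicator C x" using nC by (simp add: \<phi>_def)
      qed
      then show ?thesis by (rule tendsto_eventually)
    qed
    have meas: "\<phi> m \<in> borel_measurable borel" for m
      using cont by (rule borel_measurable_continuous_onI)
    have L: "(\<lambda>m. integral\<^sup>L \<mu> (\<phi> m)) \<longlonglongrightarrow> integral\<^sup>L \<mu> (indicator C)"
      if fm: "finite_measure \<mu>" and s: "sets \<mu> = sets borel" for \<mu> :: "'a measure"
    proof (rule integral_dominated_convergence[where w="\<lambda>_. 1"])
      show "indicator C \<in> borel_measurable \<mu>" using s C by (intro borel_measurable_indicator) (simp add: borel_closed)
      show "\<phi> m \<in> borel_measurable \<mu>" for m using meas by (simp only: measurable_cong_sets[OF s refl])
      show "integrable \<mu> (\<lambda>_. 1::real)" using fm by (simp add: finite_measure.integrable_const)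
      show "AE x in \<mu>. (\<lambda>m. \<phi> m x) \<longlonglongrightarrow> indicator C x" using lim by simp
      show "AE x in \<mu>. norm (\<phi> m x) \<le> 1" for m using rng by simp
    qed
    have ieq: "integral\<^sup>L \<mu>1 (\<phi> m) = integral\<^sup>L \<mu>2 (\<phi> m)" for m
    proof (rule eq)
      show "continuous_on UNIV (\<phi> m)" by (rule cont)
      show "0 \<le> \<phi> m x \<and> \<phi> m x \<le> 1" for x by (rule rng)
    qed
    have L1: "(\<lambda>m. integral\<^sup>L \<mu>1 (\<phi> m)) \<longlonglongrightarrow> integral\<^sup>L \<mu>2 (indicator C)"
      using L[OF f2 s2] ieq by simp
    have "integral\<^sup>L \<mu>1 (indicator C :: 'a \<Rightarrow> real) = integral\<^sup>L \<mu>2 (indicator C)"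
      by (rule LIMSEQ_unique[OF L[OF f1 s1] L1])
    then have "measure \<mu>1 C = measure \<mu>2 C" using sp1 sp2 by simp
    then show ?thesis
      using finite_measure.emeasure_eq_measure[OF f1] finite_measure.emeasure_eq_measure[OF f2] by simp
  qed
qed


definition Pj :: "nat \<Rightarrow> (nat \<Rightarrow> 'x::zero) \<Rightarrow> nat \<Rightarrow> 'x" where
  "Pj n x = (\<lambda>i. if 1 \<le> i \<and> i \<le> n then x i else 0)"

lemma Pj_cont: "continuous_on UNIV (Pj n :: (nat \<Rightarrow> 'x::real_normed_vector) \<Rightarrow> _)"
  unfolding Pj_def
proof (intro continuous_on_coordinatewise_then_product)
  fix i show "continuous_on UNIV (\<lambda>x::nat \<Rightarrow> 'x. if 1 \<le> i \<and> i \<le> n then x i else 0)"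
    by (cases "1 \<le> i \<and> i \<le> n") (simp_all only: simp_thms if_True if_False continuous_on_product_coordinates continuous_on_const)
qed

lemma Pj_meas[measurable]: "Pj n \<in> borel_measurable (borel :: (nat \<Rightarrow> 'x::{real_normed_vector,second_countable_topology}) measure)"
  by (rule borel_measurable_continuous_onI[OF Pj_cont])

lemma Pj_Pj: "m \<le> n \<Longrightarrow> Pj m (Pj n x) = Pj m x"
  by (auto simp: Pj_def)

lemma Pj_app: "1 \<le> i \<Longrightarrow> i \<le> n \<Longrightarrow> Pj n x i = x i"
  by (auto simp: Pj_def)

lemma Pj_meas_gen:
  fixes X :: "nat \<Rightarrow> 'w \<Rightarrow> 'x::{real_normed_vector,second_countable_topology}"
  assumes "\<And>i. X i \<in> borel_measurable M"
  shows "(\<lambda>\<omega>. Pj n (\<lambda>i. X i \<omega>)) \<in> borel_measurable M"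
  unfolding Pj_def
proof (intro measurable_coordinatewise_then_product)
  fix i show "(\<lambda>\<omega>. if 1 \<le> i \<and> i \<le> n then X i \<omega> else 0) \<in> borel_measurable M"
    using assms by (cases "1 \<le> i \<and> i \<le> n") (simp_all only: simp_thms if_True if_False borel_measurable_const)
qed

locale azset =
  fixes M :: "'w measure" and f :: "nat \<Rightarrow> 'w \<Rightarrow> 'x::{banach,second_countable_topology}"
  assumes PS: "prob_space M" and csym: "cond_symmetric M f" and fint: "\<And>j. integrable M (f j)"
begin

lemma f_meas[measurable]: "f j \<in> borel_measurable M"
  by (rule borel_measurable_integrable[OF fint])

lemma d_meas[measurable]: "mdiff f j \<in> borel_measurable M"
  unfolding mdiff_def[abs_def] by measurable

lemma D_meas[measurable]: "(\<lambda>\<omega>. Pj n (\<lambda>i. mdiff f i \<omega>)) \<in> borel_measurable M"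
  by (rule Pj_meas_gen[OF d_meas])

lemma D'_meas: "(\<lambda>\<omega>. Pj n ((\<lambda>i. mdiff f i \<omega>)(j := - mdiff f j \<omega>))) \<in> borel_measurable M"
proof -
  have "(\<lambda>\<omega>. Pj n ((\<lambda>i. mdiff f i \<omega>)(j := - mdiff f j \<omega>))) =
        (\<lambda>\<omega>. Pj n (\<lambda>i. (if i = j then (\<lambda>\<omega>. - mdiff f j \<omega>) else mdiff f i) \<omega>))"
  proof (rule ext)
    fix \<omega>
    have "(\<lambda>i. mdiff f i \<omega>)(j := - mdiff f j \<omega>) = (\<lambda>i. (if i = j then (\<lambda>\<omega>. - mdiff f j \<omega>) else mdiff f i) \<omega>)"
      by (rule ext) simp
    then show "Pj n ((\<lambda>i. mdiff f i \<omega>)(j := - mdiff f j \<omega>)) = Pj n (\<lambda>i. (if i = j then (\<lambda>\<omega>. - mdiff f j \<omega>) else mdiff f i) \<omega>)"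
      by simp
  qed
  also have "\<dots> \<in> borel_measurable M"
  proof (rule Pj_meas_gen)
    fix i show "(if i = j then (\<lambda>\<omega>. - mdiff f j \<omega>) else mdiff f i) \<in> borel_measurable M"
      by (cases "i = j") (simp_all only: simp_thms if_True if_False d_meas borel_measurable_uminus)
  qed
  finally show ?thesis .
qed

lemma fin_distr: "g \<in> measurable M N \<Longrightarrow> finite_measure (distr M N g)"
  by (rule prob_space.finite_measure[OF prob_space.prob_space_distr[OF PS]])

lemma sym_distr:
  assumes j: "1 \<le> j"
  shows "distr M borel (\<lambda>\<omega>. Pj j (\<lambda>i. mdiff f i \<omega>)) =
         distr M borel (\<lambda>\<omega>. Pj j ((\<lambda>i. mdiff f i \<omega>)(j := - mdiff f j \<omega>)))"
proof (rule borel_measure_eq_bcont)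
  show "finite_measure (distr M borel (\<lambda>\<omega>. Pj j (\<lambda>i. mdiff f i \<omega>)))"
    by (rule fin_distr) simp
  show "finite_measure (distr M borel (\<lambda>\<omega>. Pj j ((\<lambda>i. mdiff f i \<omega>)(j := - mdiff f j \<omega>))))"
    by (rule fin_distr) (rule D'_meas)
  fix \<phi> :: "(nat \<Rightarrow> 'x) \<Rightarrow> real"
  assume cont: "continuous_on UNIV \<phi>" and rng: "\<And>x. 0 \<le> \<phi> x \<and> \<phi> x \<le> 1"
  have \<phi>m: "\<phi> \<in> borel_measurable borel" by (rule borel_measurable_continuous_onI[OF cont])
  have c2: "continuous_on UNIV (\<lambda>x. \<phi> (Pj j x))"
    by (rule continuous_on_compose2[OF cont Pj_cont]) auto
  have b2: "bounded (range (\<lambda>x. \<phi> (Pj j x)))"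
    unfolding bounded_iff using rng by (intro exI[of _ 1]) auto
  have d2: "\<forall>x y. (\<forall>i\<in>{1..j}. x i = y i) \<longrightarrow> \<phi> (Pj j x) = \<phi> (Pj j y)"
  proof (intro allI impI)
    fix x y :: "nat \<Rightarrow> 'x" assume "\<forall>i\<in>{1..j}. x i = y i"
    then have "Pj j x = Pj j y" by (auto simp: Pj_def)
    then show "\<phi> (Pj j x) = \<phi> (Pj j y)" by simp
  qed
  have "(\<integral>\<omega>. \<phi> (Pj j (\<lambda>i. mdiff f i \<omega>)) \<partial>M) = (\<integral>\<omega>. \<phi> (Pj j ((\<lambda>i. mdiff f i \<omega>)(j := - mdiff f j \<omega>))) \<partial>M)"
    by (rule csym[unfolded cond_symmetric_def, rule_format, OF j, where \<phi>="\<lambda>x. \<phi> (Pj j x)"])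
       (use c2 b2 d2 in blast)
  then show "integral\<^sup>L (distr M borel (\<lambda>\<omega>. Pj j (\<lambda>i. mdiff f i \<omega>))) \<phi> =
        integral\<^sup>L (distr M borel (\<lambda>\<omega>. Pj j ((\<lambda>i. mdiff f i \<omega>)(j := - mdiff f j \<omega>)))) \<phi>"
    by (simp add: integral_distr[OF D'_meas \<phi>m] integral_distr[OF D_meas \<phi>m])
qed simp_all

lemma zero_lemma:
  fixes G :: "(nat \<Rightarrow> 'x) \<times> real \<Rightarrow> real"
  assumes n: "1 \<le> n" and G[measurable]: "G \<in> borel_measurable borel"
  shows "(\<integral>\<omega>. G (Pj n (\<lambda>i. mdiff f i \<omega>), norm (mdiff f (Suc n) \<omega>)) *\<^sub>R mdiff f (Suc n) \<omega> \<partial>M) = 0"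
proof -
  define G' where "G' x = G (Pj n x, norm (x (Suc n))) *\<^sub>R x (Suc n)" for x :: "nat \<Rightarrow> 'x"
  have G'm: "G' \<in> borel_measurable borel" unfolding G'_def[abs_def] by measurable
  let ?I = "(\<integral>\<omega>. G (Pj n (\<lambda>i. mdiff f i \<omega>), norm (mdiff f (Suc n) \<omega>)) *\<^sub>R mdiff f (Suc n) \<omega> \<partial>M)"
  have "?I = (\<integral>\<omega>. G' (Pj (Suc n) (\<lambda>i. mdiff f i \<omega>)) \<partial>M)"
    by (simp add: G'_def Pj_Pj Pj_app)
  also have "\<dots> = integral\<^sup>L (distr M borel (\<lambda>\<omega>. Pj (Suc n) (\<lambda>i. mdiff f i \<omega>))) G'"
    by (simp add: integral_distr[OF D_meas G'm])
  also have "\<dots> = integral\<^sup>L (distr M borel (\<lambda>\<omega>. Pj (Suc n) ((\<lambda>i. mdiff f i \<omega>)(Suc n := - mdiff f (Suc n) \<omega>)))) G'"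
    using sym_distr[of "Suc n"] by simp
  also have "\<dots> = (\<integral>\<omega>. G' (Pj (Suc n) ((\<lambda>i. mdiff f i \<omega>)(Suc n := - mdiff f (Suc n) \<omega>))) \<partial>M)"
    by (simp add: integral_distr[OF D'_meas G'm])
  also have "\<dots> = (\<integral>\<omega>. - (G (Pj n (\<lambda>i. mdiff f i \<omega>), norm (mdiff f (Suc n) \<omega>)) *\<^sub>R mdiff f (Suc n) \<omega>) \<partial>M)"
  proof (rule Bochner_Integration.integral_cong[OF refl])
    fix \<omega>
    have "Pj n (Pj (Suc n) ((\<lambda>i. mdiff f i \<omega>)(Suc n := - mdiff f (Suc n) \<omega>))) = Pj n (\<lambda>i. mdiff f i \<omega>)"
      by (auto simp: Pj_def)
    then show "G' (Pj (Suc n) ((\<lambda>i. mdiff f i \<omega>)(Suc n := - mdiff f (Suc n) \<omega>))) =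
      - (G (Pj n (\<lambda>i. mdiff f i \<omega>), norm (mdiff f (Suc n) \<omega>)) *\<^sub>R mdiff f (Suc n) \<omega>)"
      by (simp add: G'_def Pj_app)
  qed
  also have "\<dots> = - ?I" by simp
  finally have e: "?I = - ?I" .
  have "?I + ?I = 0" by (subst (2) e) simp
  then have "(2::real) *\<^sub>R ?I = 0" by (simp only: scaleR_2)
  then show ?thesis by simp
qed

end





lemma meas_fst_borel[measurable]: "fst \<in> borel_measurable (borel :: ('a::topological_space \<times> 'b::topological_space) measure)"
  by (rule borel_measurable_continuous_onI) (intro continuous_intros continuous_on_id)

lemma meas_snd_borel[measurable]: "snd \<in> borel_measurable (borel :: ('a::topological_space \<times> 'b::topological_space) measure)"
  by (rule borel_measurable_continuous_onI) (intro continuous_intros continuous_on_id)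

lemma comp_fst_meas: "g \<in> borel_measurable borel \<Longrightarrow> (\<lambda>z. g (fst z)) \<in> borel_measurable (borel :: ('a::topological_space \<times> 'b::topological_space) measure)"
  using measurable_comp[OF meas_fst_borel] by (simp add: comp_def)

definition okp :: "real \<Rightarrow> real \<Rightarrow> nat \<Rightarrow> (nat \<Rightarrow> 'x::real_normed_vector) \<Rightarrow> bool" where
  "okp p c i x \<longleftrightarrow> (\<Sum>l\<in>{1..i}. norm (x l) powr p) \<le> c"

definition okt :: "real \<Rightarrow> real \<Rightarrow> nat \<Rightarrow> (nat \<Rightarrow> 'x::real_normed_vector) \<times> real \<Rightarrow> bool" where
  "okt p c n z \<longleftrightarrow> (\<Sum>l\<in>{1..n}. norm (fst z l) powr p) + snd z powr p \<le> c"

definition Qk :: "real \<Rightarrow> nat \<Rightarrow> (nat \<Rightarrow> 'x::real_normed_vector) \<Rightarrow> bool" where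
  "Qk lam k x \<longleftrightarrow> lam < norm (\<Sum>l\<in>{1..k}. x l) \<and> (\<forall>j<k. norm (\<Sum>l\<in>{1..j}. x l) \<le> lam)"

lemma okp_meas[measurable]:
  "Measurable.pred (borel :: (nat \<Rightarrow> 'x::{real_normed_vector,second_countable_topology}) measure) (okp p c i)"
  unfolding okp_def[abs_def] by measurable

lemma okt_meas[measurable]:
  "Measurable.pred (borel :: ((nat \<Rightarrow> 'x::{real_normed_vector,second_countable_topology}) \<times> real) measure) (okt p c n)"
proof -
  have F: "(\<lambda>x::nat\<Rightarrow>'x. \<Sum>l\<in>{1..n}. norm (x l) powr p) \<in> borel_measurable borel" by measurable
  have fm: "fst \<in> borel_measurable (borel :: ((nat \<Rightarrow> 'x) \<times> real) measure)"
    by (rule borel_measurable_continuous_onI) (intro continuous_intros continuous_on_id)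
  have sm: "snd \<in> borel_measurable (borel :: ((nat \<Rightarrow> 'x) \<times> real) measure)"
    by (rule borel_measurable_continuous_onI) (intro continuous_intros continuous_on_id)
  have pm: "(\<lambda>t::real. t powr p) \<in> borel_measurable borel" by measurable
  have "(\<lambda>z. (\<lambda>x::nat\<Rightarrow>'x. \<Sum>l\<in>{1..n}. norm (x l) powr p) (fst z)) \<in> borel_measurable (borel :: ((nat \<Rightarrow> 'x) \<times> real) measure)"
    using measurable_comp[OF fm F] by (simp add: comp_def)
  moreover have "(\<lambda>z. (\<lambda>t::real. t powr p) (snd z)) \<in> borel_measurable (borel :: ((nat \<Rightarrow> 'x) \<times> real) measure)"
    using measurable_comp[OF sm pm] by (simp add: comp_def)
  ultimately have "(\<lambda>z. (\<Sum>l\<in>{1..n}. norm (fst z l) powr p) + snd z powr p) \<in> borel_measurable (borel :: ((nat \<Rightarrow> 'x) \<times> real) measure)"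
    by (intro borel_measurable_add) simp_all
  then show ?thesis unfolding okt_def[abs_def] by measurable
qed

lemma Qk_meas[measurable]:
  "Measurable.pred (borel :: (nat \<Rightarrow> 'x::{real_normed_vector,second_countable_topology}) measure) (Qk lam k)"
  unfolding Qk_def[abs_def] by measurable

lemma okp_Pj: "i \<le> n \<Longrightarrow> okp p c i (Pj n x) = okp p c i x"
proof -
  assume "i \<le> n"
  then have "(\<Sum>l\<in>{1..i}. norm (Pj n x l) powr p) = (\<Sum>l\<in>{1..i}. norm (x l) powr p)"
    by (intro sum.cong) (auto simp: Pj_def)
  then show ?thesis by (simp add: okp_def)
qed

lemma okt_okp: "okt p c n (Pj n x, norm (x (Suc n))) = okp p c (Suc n) x"
proof -
  have "(\<Sum>l\<in>{1..n}. norm (Pj n x l) powr p) = (\<Sum>l\<in>{1..n}. norm (x l) powr p)"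
    by (intro sum.cong) (auto simp: Pj_def)
  then show ?thesis by (simp add: okt_def okp_def sum.cl_ivl_Suc)
qed

lemma okp_sum_aux:
  assumes c: "0 \<le> c"
  shows "(\<Sum>i\<in>{1..N}. if okp p c i x then norm (x i) powr p else 0) \<le> (\<Sum>i\<in>{1..N}. norm (x i) powr p) \<and>
         (\<Sum>i\<in>{1..N}. if okp p c i x then norm (x i) powr p else 0) \<le> c"
proof (induction N)
  case 0 then show ?case using c by simp
next
  case (Suc N)
  show ?case
  proof (cases "okp p c (Suc N) x")
    case True
    then have "(\<Sum>i\<in>{1..Suc N}. norm (x i) powr p) \<le> c" by (simp add: okp_def)
    then show ?thesis using Suc True by (simp add: sum.cl_ivl_Suc)
  next
    case False
    have "0 \<le> norm (x (Suc N)) powr p" by simp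
    then show ?thesis using Suc False by (simp add: sum.cl_ivl_Suc; linarith)
  qed
qed

lemma Qk_Pj: "k \<le> n \<Longrightarrow> Qk lam k (Pj n x) = Qk lam k x"
proof -
  assume kn: "k \<le> n"
  have "j \<le> n \<Longrightarrow> (\<Sum>l\<in>{1..j}. Pj n x l) = (\<Sum>l\<in>{1..j}. x l)" for j
    by (intro sum.cong) (auto simp: Pj_def)
  then show ?thesis using kn by (auto simp: Qk_def)
qed

lemma telesc: "k \<le> m \<Longrightarrow> (\<Sum>i\<in>{Suc k..m}. mdiff f i \<omega>) = f m \<omega> - f k \<omega>"
proof (induction m rule: dec_induct)
  case base then show ?case by simp
next
  case (step m) then show ?case by (simp add: sum.cl_ivl_Suc mdiff_def)
qed

lemma mdiff0: "mdiff f 0 \<omega> = 0" by (simp add: mdiff_def)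

lemma azb_mono:
  assumes S: "S \<le> ennreal c" and c: "0 < c" and K: "0 < K"
  shows "azuma_bound p K S r \<le> 2 * exp (- (r powr p) / (K * c))"
proof (cases "S = 0")
  case True then show ?thesis by (simp add: azuma_bound_def)
next
  case False
  have St: "S \<noteq> \<top>" using S by (auto simp: top_unique)
  define s where "s = enn2real S"
  have Ss: "S = ennreal s" using St unfolding s_def by (metis ennreal_enn2real less_top)
  have "s \<noteq> 0" using False Ss by auto
  moreover have "0 \<le> s" by (simp add: s_def)
  ultimately have s0: "0 < s" by linarith
  have sc: "s \<le> c" using S Ss c by (simp add: ennreal_le_iff)
  have "r powr p / (K * c) \<le> r powr p / (K * s)"
    by (rule divide_left_mono) (use s0 sc K in auto)
  then have "exp (- (r powr p) / (K * s)) \<le> exp (- (r powr p) / (K * c))" by simp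
  then show ?thesis using False St by (simp add: azuma_bound_def s_def)
qed

context azset
begin

lemma Sp_ok:
  assumes p: "0 < p" and a: "0 < a" and Sp: "Sp p f \<omega> \<le> ennreal a"
  shows "okp p (a powr p) i (\<lambda>l. mdiff f l \<omega>)"
proof -
  define s where "s = (\<Sum>j. ennreal (norm (mdiff f (Suc j) \<omega>) powr p))"
  have st: "s \<noteq> \<top>" using Sp by (auto simp: Sp_def s_def Let_def top_unique)
  then have "ennreal (enn2real s powr (1 / p)) \<le> ennreal a" using Sp by (simp add: Sp_def s_def Let_def)
  then have "enn2real s powr (1 / p) \<le> a" using a by (simp add: ennreal_le_iff)
  then have "(enn2real s powr (1 / p)) powr p \<le> a powr p"
    by (intro powr_mono2) (use p in auto)
  then have sa: "enn2real s \<le> a powr p" using p by (simp add: powr_powr)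
  have "ennreal (\<Sum>j<i. norm (mdiff f (Suc j) \<omega>) powr p) = (\<Sum>j<i. ennreal (norm (mdiff f (Suc j) \<omega>) powr p))"
    by simp
  also have "\<dots> \<le> s" unfolding s_def by (rule sum_le_suminf) auto
  also have "\<dots> = ennreal (enn2real s)" using st by (metis ennreal_enn2real less_top)
  finally have "(\<Sum>j<i. norm (mdiff f (Suc j) \<omega>) powr p) \<le> enn2real s"
    by (simp add: ennreal_le_iff)
  then show ?thesis using sa by (simp add: okp_def sum.atLeast1_atMost_eq)
qed

lemma D_full_meas[measurable]: "(\<lambda>\<omega> l. mdiff f l \<omega>) \<in> borel_measurable M"
  by (rule measurable_coordinatewise_then_product) simp

end

locale azset2 = azset +
  fixes p c :: real
  assumes p1: "1 < p" and c0: "0 < c"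
begin

definition hh where "hh i \<omega> = (if okp p c i (\<lambda>l. mdiff f l \<omega>) then mdiff f i \<omega> else 0)"
definition Phi where "Phi n \<omega> = (Pj n (\<lambda>i. mdiff f i \<omega>), if n = 0 then 0 else norm (mdiff f (Suc n) \<omega>))"
definition H where "H n = vimage_algebra (space M) (Phi n) borel"
definition gk where "gk k n \<omega> = (\<Sum>i\<in>{Suc k..n}. hh i \<omega>)"
definition wk where "wk k n \<omega> = (if k < n then norm (hh n \<omega>) else 0)"

lemma hh_meas[measurable]: "hh i \<in> borel_measurable M"
  unfolding hh_def[abs_def] by measurable

lemma gk_meas[measurable]: "gk k n \<in> borel_measurable M"
  unfolding gk_def[abs_def] by measurable

lemma wk_meas[measurable]: "wk k n \<in> borel_measurable M"
  unfolding wk_def[abs_def] by measurable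

lemma hh_bound: "norm (hh i \<omega>) \<le> max 1 c"
proof (cases "okp p c i (\<lambda>l. mdiff f l \<omega>) \<and> 1 \<le> i")
  case True
  have "norm (mdiff f i \<omega>) powr p \<le> (\<Sum>l\<in>{1..i}. norm (mdiff f l \<omega>) powr p)"
    using True by (intro member_le_sum) auto
  also have "\<dots> \<le> c" using True by (simp add: okp_def)
  finally have nc: "norm (mdiff f i \<omega>) powr p \<le> c" .
  show ?thesis
  proof (cases "norm (mdiff f i \<omega>) \<le> 1")
    case True then show ?thesis by (auto simp: hh_def le_max_iff_disj)
  next
    case False
    then have "norm (mdiff f i \<omega>) powr 1 \<le> norm (mdiff f i \<omega>) powr p"
      using p1 by (intro powr_mono) auto
    then have "norm (mdiff f i \<omega>) \<le> c" using nc False by simp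
    then show ?thesis by (auto simp: hh_def le_max_iff_disj)
  qed
next
  case False
  then show ?thesis by (cases i) (auto simp: hh_def mdiff0)
qed

lemma gk_bound: "norm (gk k n \<omega>) \<le> real (card {Suc k..n}) * max 1 c"
proof -
  have "norm (gk k n \<omega>) \<le> (\<Sum>i\<in>{Suc k..n}. norm (hh i \<omega>))"
    unfolding gk_def by (rule norm_sum)
  also have "\<dots> \<le> real (card {Suc k..n}) * max 1 c"
    by (rule sum_bounded_above) (rule hh_bound)
  finally show ?thesis .
qed

lemma Phi_meas[measurable]: "Phi n \<in> borel_measurable M"
  unfolding Phi_def[abs_def] by measurable

lemma H_space[simp]: "space (H n) = space M"
  by (simp add: H_def)

lemma H_sets: "sets (H n) \<subseteq> sets M"
  unfolding H_def by (rule sets_image_in_sets[OF refl Phi_meas])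

lemma Phi_H: "Phi n \<in> measurable (H n) borel"
  unfolding H_def by (rule measurable_vimage_algebra1) auto

lemma H_mono: "sets (H n) \<subseteq> sets (H (Suc n))"
proof -
  define \<Theta> where "\<Theta> z = (Pj n (fst z), if n = 0 then 0 else norm (fst z (Suc n)))" for z :: "(nat \<Rightarrow> 'b) \<times> real"
  have t1: "(\<lambda>z. Pj n (fst z)) \<in> borel_measurable (borel :: ((nat \<Rightarrow> 'b) \<times> real) measure)"
    by (rule comp_fst_meas) measurable
  have t2: "(\<lambda>z. (\<lambda>x. if n = 0 then 0 else norm (x (Suc n))) (fst z)) \<in> borel_measurable (borel :: ((nat \<Rightarrow> 'b) \<times> real) measure)"
    by (rule comp_fst_meas) measurable
  have \<Theta>m: "\<Theta> \<in> borel_measurable borel" unfolding \<Theta>_def[abs_def]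
    using borel_measurable_Pair[OF t1 t2] by simp
  have eq: "(\<lambda>\<omega>. \<Theta> (Phi (Suc n) \<omega>)) = Phi n"
    by (auto simp: \<Theta>_def Phi_def Pj_Pj Pj_app fun_eq_iff)
  have "(\<lambda>\<omega>. \<Theta> (Phi (Suc n) \<omega>)) \<in> measurable (H (Suc n)) borel"
    using measurable_comp[OF Phi_H \<Theta>m] by (simp add: comp_def)
  then have "Phi n \<in> measurable (H (Suc n)) borel" by (simp only: eq)
  then show ?thesis unfolding H_def[of n] by (intro sets_image_in_sets) simp_all
qed

lemma H0: "sets (H 0) = {{}, space M}"
proof -
  define z where "z = ((\<lambda>i. 0) :: nat \<Rightarrow> 'b, 0::real)"
  have Pz: "Phi 0 = (\<lambda>\<omega>. z)" by (auto simp: Phi_def Pj_def z_def fun_eq_iff)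
  have "sets (H 0) = {(\<lambda>\<omega>. z) -` A \<inter> space M | A. A \<in> sets borel}"
    unfolding H_def Pz by (rule sets_vimage_algebra2) simp
  also have "\<dots> = {{}, space M}"
  proof (intro equalityI subsetI)
    fix S assume "S \<in> {(\<lambda>\<omega>. z) -` A \<inter> space M | A. A \<in> sets borel}"
    then obtain A where "S = (\<lambda>\<omega>. z) -` A \<inter> space M" by auto
    then show "S \<in> {{}, space M}" by (cases "z \<in> A") auto
  next
    fix S assume S: "S \<in> {{}, space M}"
    show "S \<in> {(\<lambda>\<omega>. z) -` A \<inter> space M | A. A \<in> sets borel}"
    proof (cases "S = {}")
      case True
      show ?thesis unfolding mem_Collect_eq by (rule exI[of _ "{}"]) (simp add: True)
    next
      case False
      then have "S = space M" using S by simp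
      show ?thesis unfolding mem_Collect_eq by (rule exI[of _ UNIV]) (simp add: \<open>S = space M\<close>)
    qed
  qed
  finally show ?thesis .
qed

lemma hh_Pj: "1 \<le> i \<Longrightarrow> i \<le> n \<Longrightarrow>
   hh i \<omega> = (if okp p c i (Pj n (\<lambda>l. mdiff f l \<omega>)) then Pj n (\<lambda>l. mdiff f l \<omega>) i else 0)"
  by (simp add: hh_def okp_Pj Pj_app)

lemma gk_H: "gk k n \<in> borel_measurable (H n)"
proof -
  define \<Gamma> where "\<Gamma> x = (\<Sum>i\<in>{Suc k..n}. if okp p c i x then x i else 0)" for x :: "nat \<Rightarrow> 'b"
  have \<Gamma>m: "\<Gamma> \<in> borel_measurable borel" unfolding \<Gamma>_def[abs_def] by measurable
  have eq: "(\<lambda>\<omega>. \<Gamma> (fst (Phi n \<omega>))) = gk k n"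
    by (auto simp: \<Gamma>_def Phi_def gk_def fun_eq_iff hh_Pj intro!: sum.cong)
  have "(\<lambda>\<omega>. \<Gamma> (fst (Phi n \<omega>))) \<in> borel_measurable (H n)"
    using measurable_comp[OF Phi_H comp_fst_meas[OF \<Gamma>m]] by (simp add: comp_def)
  then show ?thesis by (simp only: eq)
qed

lemma gk_Suc: "gk k (Suc n) \<omega> = gk k n \<omega> + (if k < Suc n then hh (Suc n) \<omega> else 0)"
  by (simp add: gk_def sum.cl_ivl_Suc)

lemma mdiff_gk: "1 \<le> j \<Longrightarrow> mdiff (gk k) j \<omega> = (if k < j then hh j \<omega> else 0)"
  by (cases j) (auto simp: mdiff_def gk_Suc)

lemma wk_H:
  assumes k1: "1 \<le> k"
  shows "wk k (Suc m) \<in> borel_measurable (H m)"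
proof -
  define \<Psi> where "\<Psi> z = (if k < Suc m \<and> okt p c m z then snd z else 0)" for z :: "(nat \<Rightarrow> 'b) \<times> real"
  have \<Psi>m: "\<Psi> \<in> borel_measurable borel" unfolding \<Psi>_def[abs_def]
    by (rule measurable_If[OF meas_snd_borel borel_measurable_const]) measurable
  have eq: "(\<lambda>\<omega>. \<Psi> (Phi m \<omega>)) = wk k (Suc m)"
  proof
    fix \<omega>
    show "\<Psi> (Phi m \<omega>) = wk k (Suc m) \<omega>"
    proof (cases "k < Suc m")
      case True
      then have m: "m \<noteq> 0" using k1 by auto
      show ?thesis using True m k1 okt_okp[of p c m "\<lambda>i. mdiff f i \<omega>"]
        by (simp add: \<Psi>_def Phi_def wk_def hh_def)
    qed (simp add: \<Psi>_def wk_def)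
  qed
  have "(\<lambda>\<omega>. \<Psi> (Phi m \<omega>)) \<in> borel_measurable (H m)"
    using measurable_comp[OF Phi_H \<Psi>m] by (simp add: comp_def)
  then show ?thesis by (simp only: eq)
qed

end





context azset2
begin

lemma emm: "emeasure M A = ennreal (measure M A)"
  by (rule finite_measure.emeasure_eq_measure[OF prob_space.finite_measure[OF PS]])

definition Ak where "Ak lam k = {\<omega>\<in>space M. lam < norm (f k \<omega> - f 0 \<omega>) \<and> (\<forall>j<k. norm (f j \<omega> - f 0 \<omega>) \<le> lam)}"

lemma Ak_meas[measurable]: "Ak lam k \<in> sets M"
  unfolding Ak_def by measurable

lemma telesc0: "(\<Sum>l\<in>{1..j}. mdiff f l \<omega>) = f j \<omega> - f 0 \<omega>"
  using telesc[of 0 j f \<omega>] by simp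

lemma Ak_Pj:
  assumes kn: "k \<le> n" and \<omega>: "\<omega> \<in> space M"
  shows "(\<omega> \<in> Ak lam k) = Qk lam k (Pj n (\<lambda>l. mdiff f l \<omega>))"
proof -
  have "Qk lam k (Pj n (\<lambda>l. mdiff f l \<omega>)) = Qk lam k (\<lambda>l. mdiff f l \<omega>)" by (rule Qk_Pj[OF kn])
  moreover have "(\<omega> \<in> Ak lam k) = Qk lam k (\<lambda>l. mdiff f l \<omega>)"
    using \<omega> by (simp add: Ak_def Qk_def telesc0 telesc[of 0])
  ultimately show ?thesis by simp
qed

lemma um_dens:
  assumes A: "A \<in> sets M" and P: "0 < measure M A"
  shows "uniform_measure M A = density M (\<lambda>\<omega>. ennreal (indicator A \<omega> / measure M A))"
proof -
  have e: "emeasure M A = ennreal (measure M A)" by (rule emm)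
  have "(\<lambda>x. indicator A x / emeasure M A) = (\<lambda>\<omega>. ennreal (indicator A \<omega> / measure M A))"
  proof
    fix x show "indicator A x / emeasure M A = ennreal (indicator A x / measure M A)"
      using P by (cases "x \<in> A") (simp_all add: e divide_ennreal[symmetric])
  qed
  then show ?thesis unfolding uniform_measure_def by simp
qed

lemma P'_prob: "A \<in> sets M \<Longrightarrow> 0 < measure M A \<Longrightarrow> prob_space (uniform_measure M A)"
  by (rule prob_space_uniform_measure) (simp_all add: emm)

lemma intM':
  fixes h :: "_ \<Rightarrow> 'c::{banach,second_countable_topology}"
  assumes A: "A \<in> sets M" and P: "0 < measure M A" and h: "h \<in> borel_measurable M"
    and B: "\<And>\<omega>. norm (h \<omega>) \<le> B"
  shows "integrable (uniform_measure M A) h"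
proof -
  interpret P': prob_space "uniform_measure M A" by (rule P'_prob[OF A P])
  have hm: "h \<in> borel_measurable (uniform_measure M A)"
    using h by (simp only: measurable_cong_sets[OF sets_uniform_measure refl])
  have ae: "AE x in uniform_measure M A. norm (h x) \<le> B" using B by simp
  show ?thesis by (rule P'.integrable_const_bound[OF ae hm])
qed

lemma norm_ind: "norm (indicator B \<omega> *\<^sub>R (x::'b)) \<le> norm x"
  by (simp add: indicator_def)

lemma mart:
  assumes k1: "1 \<le> k" and P: "0 < measure M (Ak lam k)"
  shows "martingale_on (uniform_measure M (Ak lam k)) H (gk k)"
  unfolding martingale_on_def
proof (intro allI conjI ballI)
  fix n
  show "gk k n \<in> borel_measurable (H n)" by (rule gk_H)
  show "integrable (uniform_measure M (Ak lam k)) (gk k n)"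
    by (rule intM'[OF Ak_meas P gk_meas gk_bound])
  fix B assume B: "B \<in> sets (H n)"
  define inc where "inc \<omega> = (if k < Suc n then hh (Suc n) \<omega> else 0)" for \<omega>
  have incm[measurable]: "inc \<in> borel_measurable M" unfolding inc_def[abs_def] by measurable
  have BM[measurable]: "B \<in> sets M" using B H_sets by auto
  have i1: "integrable (uniform_measure M (Ak lam k)) (\<lambda>\<omega>. indicator B \<omega> *\<^sub>R gk k n \<omega>)"
    by (rule intM'[OF Ak_meas P, where B="real (card {Suc k..n}) * max 1 c"])
       (measurable, rule order_trans[OF norm_ind gk_bound])
  have i2: "integrable (uniform_measure M (Ak lam k)) (\<lambda>\<omega>. indicator B \<omega> *\<^sub>R inc \<omega>)"
    by (rule intM'[OF Ak_meas P, where B="max 1 c"])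
       (measurable, rule order_trans[OF norm_ind], auto simp: inc_def hh_bound)
  have z: "(\<integral>\<omega>. indicator B \<omega> *\<^sub>R inc \<omega> \<partial>uniform_measure M (Ak lam k)) = 0"
  proof (cases "k < Suc n")
    case False then show ?thesis by (simp add: inc_def)
  next
    case True
    then have kn: "k \<le> n" by simp
    have n1: "1 \<le> n" using kn k1 by simp
    have sv: "sets (H n) = {Phi n -` A \<inter> space M | A. A \<in> sets borel}"
      unfolding H_def by (rule sets_vimage_algebra2) simp
    obtain S where S[measurable]: "S \<in> sets borel" and BS: "B = Phi n -` S \<inter> space M"
      using B unfolding sv by auto
    define Pa where "Pa = measure M (Ak lam k)"
    define G where "G z = indicator {x. Qk lam k x} (fst z) / Pa * indicator S z * (if okt p c n z then 1 else 0)"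
      for z :: "(nat \<Rightarrow> 'b) \<times> real"
    have g1[measurable]: "(\<lambda>z. indicator {x. Qk lam k x} (fst z) :: real) \<in> borel_measurable (borel :: ((nat \<Rightarrow> 'b) \<times> real) measure)"
      by (rule comp_fst_meas) measurable
    have Gm: "G \<in> borel_measurable borel" unfolding G_def[abs_def] by measurable
    have "(\<integral>\<omega>. indicator B \<omega> *\<^sub>R inc \<omega> \<partial>uniform_measure M (Ak lam k)) =
          (\<integral>\<omega>. (indicator (Ak lam k) \<omega> / Pa) *\<^sub>R (indicator B \<omega> *\<^sub>R inc \<omega>) \<partial>M)"
      unfolding um_dens[OF Ak_meas P] Pa_def
      by (rule integral_density) auto
    also have "\<dots> = (\<integral>\<omega>. G (Pj n (\<lambda>i. mdiff f i \<omega>), norm (mdiff f (Suc n) \<omega>)) *\<^sub>R mdiff f (Suc n) \<omega> \<partial>M)"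
    proof (rule Bochner_Integration.integral_cong[OF refl])
      fix \<omega> assume \<omega>: "\<omega> \<in> space M"
      have a: "indicator (Ak lam k) \<omega> = (indicator {x. Qk lam k x} (Pj n (\<lambda>l. mdiff f l \<omega>)) :: real)"
        using Ak_Pj[OF kn \<omega>] by (simp add: indicator_def)
      have b: "indicator B \<omega> = (indicator S (Pj n (\<lambda>i. mdiff f i \<omega>), norm (mdiff f (Suc n) \<omega>)) :: real)"
        using \<omega> n1 by (simp add: BS Phi_def indicator_def)
      have o: "okp p c (Suc n) (\<lambda>l. mdiff f l \<omega>) = okt p c n (Pj n (\<lambda>i. mdiff f i \<omega>), norm (mdiff f (Suc n) \<omega>))"
        using okt_okp[of p c n "\<lambda>i. mdiff f i \<omega>"] by simp
      have i: "inc \<omega> = (if okt p c n (Pj n (\<lambda>i. mdiff f i \<omega>), norm (mdiff f (Suc n) \<omega>)) then mdiff f (Suc n) \<omega> else 0)"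
        using True o by (simp add: inc_def hh_def)
      show "(indicator (Ak lam k) \<omega> / Pa) *\<^sub>R (indicator B \<omega> *\<^sub>R inc \<omega>) =
            G (Pj n (\<lambda>i. mdiff f i \<omega>), norm (mdiff f (Suc n) \<omega>)) *\<^sub>R mdiff f (Suc n) \<omega>"
        unfolding a b i G_def by simp
    qed
    also have "\<dots> = 0" by (rule zero_lemma[OF n1 Gm])
    finally show ?thesis .
  qed
  have "(\<lambda>\<omega>. indicator B \<omega> *\<^sub>R gk k (Suc n) \<omega>) = (\<lambda>\<omega>. indicator B \<omega> *\<^sub>R gk k n \<omega> + indicator B \<omega> *\<^sub>R inc \<omega>)"
    by (simp add: gk_Suc inc_def scaleR_add_right fun_eq_iff)
  then show "set_lebesgue_integral (uniform_measure M (Ak lam k)) B (gk k (Suc n)) =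
             set_lebesgue_integral (uniform_measure M (Ak lam k)) B (gk k n)"
    by (simp add: set_lebesgue_integral_def Bochner_Integration.integral_add[OF i1 i2] z)
qed

end





context azset2
begin

lemma per_k:
  assumes k1: "1 \<le> k" and K: "azuma_K TYPE('a) TYPE('b) p K" and r: "0 < r"
  shows "measure M (Ak lam k \<inter> {\<omega>\<in>space M. ennreal r \<le> mstar (gk k) \<omega>})
         \<le> 2 * exp (- (r powr p) / (K * c)) * measure M (Ak lam k)"
proof (cases "measure M (Ak lam k) = 0")
  case True
  have "measure M (Ak lam k \<inter> {\<omega>\<in>space M. ennreal r \<le> mstar (gk k) \<omega>}) \<le> measure M (Ak lam k)"
    by (rule finite_measure.finite_measure_mono[OF prob_space.finite_measure[OF PS]]) auto
  then show ?thesis using True by simp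
next
  case False
  then have P: "0 < measure M (Ak lam k)" using measure_nonneg[of M "Ak lam k"] by linarith
  let ?M' = "uniform_measure M (Ak lam k)"
  let ?X = "{\<omega>\<in>space M. ennreal r \<le> mstar (gk k) \<omega>}"
  have Xm: "?X \<in> sets M" unfolding mstar_def by measurable
  have K0: "0 < K" using K unfolding azuma_K_def by blast
  have KK: "\<forall>(M :: 'a measure) F (f :: nat \<Rightarrow> 'a \<Rightarrow> 'b) (w :: nat \<Rightarrow> 'a \<Rightarrow> real).
        prob_space M \<and> filtration_on M F \<and> martingale_on M F f \<and>
        (\<forall>j\<ge>1. w j \<in> borel_measurable (F (j - 1)) \<and> (\<forall>\<omega>\<in>space M. w j \<omega> \<ge> 0)) \<and>
        (\<forall>j\<ge>1. AE \<omega> in M. norm (mdiff f j \<omega>) \<le> w j \<omega>)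
        \<longrightarrow> (\<forall>r>0. measure M {\<omega>\<in>space M. ennreal r \<le> mstar f \<omega>}
                   \<le> azuma_bound p K (esssup M (\<lambda>\<omega>. \<Sum>j. ennreal (w (Suc j) \<omega> powr p))) r)"
    using K unfolding azuma_K_def by blast
  have prob': "prob_space ?M'" by (rule P'_prob[OF Ak_meas P])
  have filt: "filtration_on ?M' H" unfolding filtration_on_def using H_sets H_mono H0 by simp
  have mart': "martingale_on ?M' H (gk k)" by (rule mart[OF k1 P])
  have wcond: "\<forall>j\<ge>1. wk k j \<in> borel_measurable (H (j - 1)) \<and> (\<forall>\<omega>\<in>space ?M'. 0 \<le> wk k j \<omega>)"
  proof (intro allI impI conjI ballI)
    fix j :: nat assume "1 \<le> j"
    then obtain m where j: "j = Suc m" by (cases j) auto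
    show "wk k j \<in> borel_measurable (H (j - 1))" using wk_H[OF k1, of m] j by simp
    fix \<omega> show "0 \<le> wk k j \<omega>" by (simp add: wk_def)
  qed
  have dcond: "\<forall>j\<ge>1. AE \<omega> in ?M'. norm (mdiff (gk k) j \<omega>) \<le> wk k j \<omega>"
  proof (intro allI impI AE_I2)
    fix j :: nat and \<omega> assume "1 \<le> j"
    then show "norm (mdiff (gk k) j \<omega>) \<le> wk k j \<omega>" by (simp add: mdiff_gk wk_def)
  qed
  have az: "measure ?M' {\<omega>\<in>space ?M'. ennreal r \<le> mstar (gk k) \<omega>}
      \<le> azuma_bound p K (esssup ?M' (\<lambda>\<omega>. \<Sum>j. ennreal (wk k (Suc j) \<omega> powr p))) r"
    by (rule KK[rule_format, OF conjI[OF prob' conjI[OF filt conjI[OF mart' conjI[OF wcond dcond]]]] r])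
  have wsum: "(\<Sum>j. ennreal (wk k (Suc j) \<omega> powr p)) \<le> ennreal c" for \<omega>
  proof -
    define a where "a i = (if okp p c i (\<lambda>l. mdiff f l \<omega>) then norm (mdiff f i \<omega>) powr p else 0)" for i
    have wa: "wk k (Suc j) \<omega> powr p \<le> a (Suc j)" for j
      by (auto simp: wk_def hh_def a_def)
    have "(\<Sum>j. ennreal (wk k (Suc j) \<omega> powr p)) = (SUP N. \<Sum>j<N. ennreal (wk k (Suc j) \<omega> powr p))"
      by (rule suminf_eq_SUP)
    also have "\<dots> \<le> ennreal c"
    proof (rule SUP_least)
      fix N
      have "(\<Sum>j<N. a (Suc j)) = (\<Sum>i\<in>{1..N}. a i)" by (simp add: sum.atLeast1_atMost_eq)
      also have "\<dots> \<le> c" using okp_sum_aux[where N=N and x="\<lambda>l. mdiff f l \<omega>" and c=c and p=p] c0 by (simp add: a_def)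
      finally have rb: "(\<Sum>j<N. a (Suc j)) \<le> c" .
      have "(\<Sum>j<N. ennreal (wk k (Suc j) \<omega> powr p)) \<le> (\<Sum>j<N. ennreal (a (Suc j)))"
        by (intro sum_mono ennreal_leI wa)
      also have "\<dots> = ennreal (\<Sum>j<N. a (Suc j))" by (rule sum_ennreal) (simp add: a_def)
      also have "\<dots> \<le> ennreal c" by (rule ennreal_leI[OF rb])
      finally show "(\<Sum>j<N. ennreal (wk k (Suc j) \<omega> powr p)) \<le> ennreal c" .
    qed
    finally show ?thesis .
  qed
  have sm: "(\<lambda>\<omega>. \<Sum>j. ennreal (wk k (Suc j) \<omega> powr p)) \<in> borel_measurable M" by measurable
  have sm': "(\<lambda>\<omega>. \<Sum>j. ennreal (wk k (Suc j) \<omega> powr p)) \<in> borel_measurable ?M'"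
    using sm by (simp only: measurable_cong_sets[OF sets_uniform_measure refl])
  have ae: "AE \<omega> in ?M'. (\<Sum>j. ennreal (wk k (Suc j) \<omega> powr p)) \<le> ennreal c"
    using wsum by simp
  have ess: "esssup ?M' (\<lambda>\<omega>. \<Sum>j. ennreal (wk k (Suc j) \<omega> powr p)) \<le> ennreal c"
    by (rule esssup_I[OF sm' ae])
  have "measure ?M' ?X \<le> azuma_bound p K (esssup ?M' (\<lambda>\<omega>. \<Sum>j. ennreal (wk k (Suc j) \<omega> powr p))) r"
    using az by simp
  also have "\<dots> \<le> 2 * exp (- (r powr p) / (K * c))" by (rule azb_mono[OF ess c0 K0])
  finally have bnd: "measure ?M' ?X \<le> 2 * exp (- (r powr p) / (K * c))" .
  have "measure ?M' ?X = measure M (Ak lam k \<inter> ?X) / measure M (Ak lam k)"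
    by (rule measure_uniform_measure) (use P Xm in \<open>simp_all add: emm\<close>)
  then show ?thesis using bnd P by (simp add: pos_divide_le_eq)
qed

end





context azset
begin

lemma main_K:
  assumes p1: "1 < p" and lam: "0 < lam" and \<delta>: "0 < \<delta>" and \<beta>\<delta>: "\<delta> < \<beta> - 1"
    and K: "azuma_K TYPE('w) TYPE('x) p K"
  shows "measure M {\<omega>\<in>space M. ennreal (\<beta> * lam) < mstar f \<omega> \<and> Sp p f \<omega> \<le> ennreal (\<delta> * lam)}
     \<le> 2 * exp (- (((\<beta> - 1 - \<delta>) * lam) powr p) / (K * (\<delta> * lam) powr p))
        * measure M {\<omega>\<in>space M. ennreal lam < mstar f \<omega>}"
proof -
  define c where "c = (\<delta> * lam) powr p"
  have c0: "0 < c" using \<delta> lam by (simp add: c_def)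
  interpret A2: azset2 M f p c
    using azset_axioms p1 c0 by (simp add: azset2_def azset2_axioms_def)
  define r where "r = (\<beta> - 1 - \<delta>) * lam"
  have r0: "0 < r" using \<beta>\<delta> lam by (simp add: r_def)
  define E where "E = {\<omega>\<in>space M. ennreal (\<beta> * lam) < mstar f \<omega> \<and> Sp p f \<omega> \<le> ennreal (\<delta> * lam)}"
  define U where "U = {\<omega>\<in>space M. ennreal lam < mstar f \<omega>}"
  define Bd where "Bd = 2 * exp (- (r powr p) / (K * c))"
  have Em: "E \<in> sets M" unfolding E_def mstar_def Sp_def Let_def by measurable
  have Um: "U \<in> sets M" unfolding U_def mstar_def by measurable
  have exA: "\<exists>k. \<omega> \<in> A2.Ak lam k" if \<omega>: "\<omega> \<in> space M" and j: "lam < norm (f j \<omega> - f 0 \<omega>)" for \<omega> j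
  proof -
    define k where "k = (LEAST j. lam < norm (f j \<omega> - f 0 \<omega>))"
    have "lam < norm (f k \<omega> - f 0 \<omega>)" unfolding k_def by (rule LeastI[of _ j]) (rule j)
    moreover have "\<forall>i<k. norm (f i \<omega> - f 0 \<omega>) \<le> lam"
      unfolding k_def using not_less_Least by force
    ultimately show ?thesis using \<omega> by (auto simp: A2.Ak_def)
  qed
  have exj: "\<exists>j. a < norm (f j \<omega> - f 0 \<omega>)" if "ennreal a < mstar f \<omega>" "0 \<le> a" for a \<omega>
  proof -
    from that obtain j where "ennreal a < ennreal (norm (f j \<omega> - f 0 \<omega>))"
      unfolding mstar_def by (auto simp: less_SUP_iff)
    then show ?thesis using that(2) by (auto simp: ennreal_less_iff)
  qed
  have \<beta>1: "1 < \<beta>" using \<beta>\<delta> \<delta> by simp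
  have cover: "E \<subseteq> (\<Union>k. A2.Ak lam k)"
  proof
    fix \<omega> assume "\<omega> \<in> E"
    then have \<omega>: "\<omega> \<in> space M" and ms: "ennreal (\<beta> * lam) < mstar f \<omega>" by (auto simp: E_def)
    obtain j where "\<beta> * lam < norm (f j \<omega> - f 0 \<omega>)" using exj[OF ms] \<beta>1 lam by auto
    then have "lam < norm (f j \<omega> - f 0 \<omega>)" using \<beta>1 lam
      by (smt (verit) mult_less_cancel_right2)
    then show "\<omega> \<in> (\<Union>k. A2.Ak lam k)" using exA[OF \<omega>] by blast
  qed
  have union: "(\<Union>k. A2.Ak lam k) = U"
  proof
    show "(\<Union>k. A2.Ak lam k) \<subseteq> U"
    proof
      fix \<omega> assume "\<omega> \<in> (\<Union>k. A2.Ak lam k)"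
      then obtain k where \<omega>: "\<omega> \<in> space M" and lk: "lam < norm (f k \<omega> - f 0 \<omega>)" by (auto simp: A2.Ak_def)
      have "ennreal lam < ennreal (norm (f k \<omega> - f 0 \<omega>))" using lk lam by (simp add: ennreal_less_iff)
      also have "\<dots> \<le> mstar f \<omega>" unfolding mstar_def by (rule SUP_upper) simp
      finally show "\<omega> \<in> U" using \<omega> by (simp add: U_def)
    qed
    show "U \<subseteq> (\<Union>k. A2.Ak lam k)"
    proof
      fix \<omega> assume "\<omega> \<in> U"
      then have \<omega>: "\<omega> \<in> space M" and ms: "ennreal lam < mstar f \<omega>" by (auto simp: U_def)
      obtain j where "lam < norm (f j \<omega> - f 0 \<omega>)" using exj[OF ms] lam by auto
      then show "\<omega> \<in> (\<Union>k. A2.Ak lam k)" using exA[OF \<omega>] by blast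
    qed
  qed
  have disj: "disjoint_family (A2.Ak lam)"
  proof -
    have *: "\<omega> \<notin> A2.Ak lam m \<or> \<omega> \<notin> A2.Ak lam n" if "m < n" for m n \<omega>
      using that by (auto simp: A2.Ak_def)
    show ?thesis unfolding disjoint_family_on_def
      by (metis * disjoint_iff linorder_neqE_nat)
  qed
  have key: "1 \<le> k \<and> ennreal r \<le> mstar (A2.gk k) \<omega>" if \<omega>E: "\<omega> \<in> E" and \<omega>A: "\<omega> \<in> A2.Ak lam k" for \<omega> k
  proof -
    have sp: "Sp p f \<omega> \<le> ennreal (\<delta> * lam)" and ms: "ennreal (\<beta> * lam) < mstar f \<omega>"
      and \<omega>: "\<omega> \<in> space M" using \<omega>E by (auto simp: E_def)
    have ok: "okp p c i (\<lambda>l. mdiff f l \<omega>)" for i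
      using Sp_ok[OF _ _ sp, of i] p1 \<delta> lam by (simp add: c_def)
    have hh: "A2.hh i \<omega> = mdiff f i \<omega>" for i using ok by (simp add: A2.hh_def)
    obtain m where m: "\<beta> * lam < norm (f m \<omega> - f 0 \<omega>)" using exj[OF ms] \<beta>1 lam by auto
    have lk: "lam < norm (f k \<omega> - f 0 \<omega>)" and lj: "\<And>j. j < k \<Longrightarrow> norm (f j \<omega> - f 0 \<omega>) \<le> lam"
      using \<omega>A by (auto simp: A2.Ak_def)
    have k1: "1 \<le> k"
    proof (rule ccontr)
      assume "\<not> 1 \<le> k" then have "k = 0" by simp
      then show False using lk lam by simp
    qed
    have dk: "norm (mdiff f k \<omega>) \<le> \<delta> * lam"
    proof (rule ccontr)
      assume "\<not> norm (mdiff f k \<omega>) \<le> \<delta> * lam"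
      then have "(\<delta> * lam) powr p < norm (mdiff f k \<omega>) powr p"
        using p1 \<delta> lam by (intro powr_less_mono2) auto
      moreover have "norm (mdiff f k \<omega>) powr p \<le> (\<Sum>l\<in>{1..k}. norm (mdiff f l \<omega>) powr p)"
        using k1 by (intro member_le_sum) auto
      moreover have "(\<Sum>l\<in>{1..k}. norm (mdiff f l \<omega>) powr p) \<le> c" using ok[of k] by (simp add: okp_def)
      ultimately show False by (simp add: c_def)
    qed
    have fk: "norm (f k \<omega> - f 0 \<omega>) \<le> lam + \<delta> * lam"
    proof -
      have "f k \<omega> - f 0 \<omega> = (f (k - 1) \<omega> - f 0 \<omega>) + mdiff f k \<omega>" by (simp add: mdiff_def)
      then have "norm (f k \<omega> - f 0 \<omega>) \<le> norm (f (k - 1) \<omega> - f 0 \<omega>) + norm (mdiff f k \<omega>)"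
        by (metis norm_triangle_ineq)
      moreover have "norm (f (k - 1) \<omega> - f 0 \<omega>) \<le> lam" using lj k1 by simp
      ultimately show ?thesis using dk by simp
    qed
    have "0 < (\<beta> - 1) * lam" using \<beta>1 lam by simp
    then have bl: "lam < \<beta> * lam" by (simp add: algebra_simps)
    have "0 < (\<beta> - 1 - \<delta>) * lam" using \<beta>\<delta> lam by simp
    then have bdl: "lam + \<delta> * lam < \<beta> * lam" by (simp add: algebra_simps)
    have mk: "k < m"
    proof (rule ccontr)
      assume "\<not> k < m"
      then have "m < k \<or> m = k" by auto
      then show False
      proof
        assume "m < k" then show False using lj[of m] m bl by linarith
      next
        assume "m = k" then show False using fk m bdl by simp
      qed
    qed
    have g: "A2.gk k m \<omega> = f m \<omega> - f k \<omega>"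
      using telesc[of k m f \<omega>] mk by (simp add: A2.gk_def hh)
    have g0: "A2.gk k 0 \<omega> = 0" by (simp add: A2.gk_def)
    have "norm (f m \<omega> - f 0 \<omega>) \<le> norm (A2.gk k m \<omega>) + norm (f k \<omega> - f 0 \<omega>)"
      unfolding g using norm_triangle_sub[of "f m \<omega> - f 0 \<omega>" "f k \<omega> - f 0 \<omega>"] by (simp add: add.commute)
    then have "r \<le> norm (A2.gk k m \<omega> - A2.gk k 0 \<omega>)" using m fk unfolding r_def g0
      by (simp add: algebra_simps)
    then have "ennreal r \<le> ennreal (norm (A2.gk k m \<omega> - A2.gk k 0 \<omega>))" by (rule ennreal_leI)
    also have "\<dots> \<le> mstar (A2.gk k) \<omega>" unfolding mstar_def by (rule SUP_upper) simp
    finally show ?thesis using k1 by simp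
  qed
  have Ak0: "A2.Ak lam 0 = {}" using lam by (auto simp: A2.Ak_def)
  have bound: "measure M (E \<inter> A2.Ak lam k) \<le> Bd * measure M (A2.Ak lam k)" for k
  proof (cases "k = 0")
    case True then show ?thesis by (simp add: Ak0)
  next
    case False
    then have k1: "1 \<le> k" by simp
    have "E \<inter> A2.Ak lam k \<subseteq> A2.Ak lam k \<inter> {\<omega>\<in>space M. ennreal r \<le> mstar (A2.gk k) \<omega>}"
      using key by (auto simp: E_def)
    then have "measure M (E \<inter> A2.Ak lam k) \<le> measure M (A2.Ak lam k \<inter> {\<omega>\<in>space M. ennreal r \<le> mstar (A2.gk k) \<omega>})"
      by (intro finite_measure.finite_measure_mono[OF prob_space.finite_measure[OF PS]])
         (auto simp: mstar_def)
    also have "\<dots> \<le> Bd * measure M (A2.Ak lam k)"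
      unfolding Bd_def by (rule A2.per_k[OF k1 K r0])
    finally show ?thesis .
  qed
  have fin: "emeasure M X \<noteq> \<infinity>" for X by (simp add: A2.emm)
  have s1: "(\<lambda>k. measure M (E \<inter> A2.Ak lam k)) sums measure M E"
  proof -
    have "(\<lambda>k. measure M (E \<inter> A2.Ak lam k)) sums measure M (\<Union>k. E \<inter> A2.Ak lam k)"
      by (rule measure_UNION) (use Em disj fin in \<open>auto simp: disjoint_family_on_def\<close>)
    moreover have "(\<Union>k. E \<inter> A2.Ak lam k) = E" using cover by blast
    ultimately show ?thesis by simp
  qed
  have s2: "(\<lambda>k. measure M (A2.Ak lam k)) sums measure M U"
  proof -
    have "(\<lambda>k. measure M (A2.Ak lam k)) sums measure M (\<Union>k. A2.Ak lam k)"
      by (rule measure_UNION) (use disj fin in auto)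
    then show ?thesis using union by simp
  qed
  have "measure M E \<le> Bd * measure M U"
    by (rule sums_le[OF bound s1 sums_mult[OF s2]])
  then show ?thesis by (simp add: E_def U_def Bd_def r_def c_def)
qed

end





theorem lemma3p9:
  fixes M :: "'w measure" and F :: "nat \<Rightarrow> 'w measure"
    and f :: "nat \<Rightarrow> 'w \<Rightarrow> 'x::{banach,second_countable_topology}"
    and p \<beta> \<delta> lam :: real
  assumes "1 < p" and "p \<le> 2"
    and "separable_space (euclidean :: 'x topology)"
    and "has_azuma_type TYPE('w) TYPE('x) p"
    and "prob_space M" and "filtration_on M F" and "martingale_on M F f"
    and "cond_symmetric M f"
    and "\<beta> > 0" and "0 < \<delta>" and "\<delta> < \<beta> - 1" and "lam > 0"
  shows "measure M {\<omega>\<in>space M. ennreal (\<beta> * lam) < mstar f \<omega> \<and> Sp p f \<omega> \<le> ennreal (\<delta> * lam)}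
           \<le> 2 * exp (- ((\<beta> - 1 - \<delta>) powr p) / (azuma_const TYPE('w) TYPE('x) p * \<delta> powr p))
             * measure M {\<omega>\<in>space M. ennreal lam < mstar f \<omega>}"
proof -
  have p1: "1 < p" and \<delta>: "0 < \<delta>" and \<beta>\<delta>: "\<delta> < \<beta> - 1" and lam: "0 < lam"
    using assms(1,10,11,12) by auto
  have fint: "integrable M (f j)" for j using assms(7) by (simp add: martingale_on_def)
  interpret A: azset M f
    by (rule azset.intro[OF assms(5) assms(8) fint])
  define S where "S = {K. azuma_K TYPE('w) TYPE('x) p K}"
  have Sne: "S \<noteq> {}" using assms(4) by (auto simp: S_def has_azuma_type_def)
  have Spos: "0 < K" if "K \<in> S" for K using that by (simp add: S_def azuma_K_def)
  have bdd: "bdd_below S" by (rule bdd_belowI[of _ 0]) (use Spos in \<open>auto intro: less_imp_le\<close>)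
  define L where "L = measure M {\<omega>\<in>space M. ennreal (\<beta> * lam) < mstar f \<omega> \<and> Sp p f \<omega> \<le> ennreal (\<delta> * lam)}"
  define Pl where "Pl = measure M {\<omega>\<in>space M. ennreal lam < mstar f \<omega>}"
  define a where "a = (\<beta> - 1 - \<delta>) powr p"
  define d where "d = \<delta> powr p"
  define g where "g K = 2 * exp (- a / (K * d)) * Pl" for K
  have a0: "0 < a" using \<beta>\<delta> by (simp add: a_def)
  have d0: "0 < d" using \<delta> by (simp add: d_def)
  have Pl0: "0 \<le> Pl" by (simp add: Pl_def)
  have LK: "L \<le> g K" if K: "K \<in> S" for K
  proof -
    have lp: "0 < lam powr p" using lam by simp
    have e1: "((\<beta> - 1 - \<delta>) * lam) powr p = a * lam powr p"
      using \<beta>\<delta> lam by (simp add: a_def powr_mult)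
    have e2: "(\<delta> * lam) powr p = d * lam powr p"
      using \<delta> lam by (simp add: d_def powr_mult)
    have e3: "- (((\<beta> - 1 - \<delta>) * lam) powr p) / (K * (\<delta> * lam) powr p) = - a / (K * d)"
      unfolding e1 e2 using lp by (simp add: field_simps)
    have "L \<le> 2 * exp (- (((\<beta> - 1 - \<delta>) * lam) powr p) / (K * (\<delta> * lam) powr p)) * Pl"
      unfolding L_def Pl_def by (rule A.main_K[OF p1 lam \<delta> \<beta>\<delta>]) (use K in \<open>simp add: S_def\<close>)
    then show ?thesis unfolding e3 g_def .
  qed
  have K0ge: "0 \<le> Inf S"
    by (rule cInf_greatest[OF Sne]) (use Spos in \<open>auto intro: less_imp_le\<close>)
  have main: "L \<le> g (Inf S)"
  proof (cases "Inf S = 0")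
    case True
    obtain K where K: "K \<in> S" using Sne by auto
    have "- a / (K * d) \<le> 0" using a0 d0 Spos[OF K] by (simp add: divide_nonneg_pos)
    then have "exp (- a / (K * d)) \<le> 1" by simp
    then have "exp (- a / (K * d)) * Pl \<le> 1 * Pl" by (rule mult_right_mono[OF _ Pl0])
    then have "g K \<le> 2 * Pl" unfolding g_def by simp
    then show ?thesis using LK[OF K] True by (simp add: g_def)
  next
    case False
    then have K0: "0 < Inf S" using K0ge by simp
    show ?thesis
    proof (rule ccontr)
      assume "\<not> L \<le> g (Inf S)"
      then have eps: "0 < L - g (Inf S)" by simp
      have "isCont g (Inf S)" unfolding g_def by (intro continuous_intros) (use K0 d0 in auto)
      then have "g \<midarrow>Inf S\<rightarrow> g (Inf S)" by (simp add: isCont_def)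
      from LIM_D[OF this eps] obtain s where s: "0 < s"
        and sg: "\<And>x. x \<noteq> Inf S \<and> norm (x - Inf S) < s \<Longrightarrow> norm (g x - g (Inf S)) < L - g (Inf S)"
        by blast
      have "Inf S < Inf S + s" using s by simp
      then obtain K where K: "K \<in> S" and Ks: "K < Inf S + s" using cInf_less_iff[OF Sne bdd] by blast
      have KI: "Inf S \<le> K" by (rule cInf_lower[OF K bdd])
      show False
      proof (cases "K = Inf S")
        case True then show False using LK[OF K] eps by simp
      next
        case False
        then have "norm (g K - g (Inf S)) < L - g (Inf S)" using sg[of K] KI Ks by simp
        then show False using LK[OF K] by simp
      qed
    qed
  qed
  then show ?thesis by (simp add: L_def g_def a_def d_def Pl_def S_def azuma_const_def)
qed



end
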